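(* Let $(X,d)$ be a metric space, let $P\subseteq X$ be a finite set of terminals, and let $P_1,\dots,P_k$ be a partition of $P$ into nonempty sets. Suppose $\mathcal{A}$ is an $\alpha$-factor approximation algorithm for the minimum Steiner tree problem in $(X,d)$ (for every finite $S\subseteq X$ it outputs a Steiner tree for $S$ of length at most $\alpha$ times the minimum length of a Steiner tree for $S$). Consider the following "simple bottom-up" algorithm: for each $i=1,\dots,k$ compute $T_i:=\mathcal{A}(P_i)$, choose an arbitrary connection point $q_i\in P_i$, compute $T_{top}:=\mathcal{A}(\{q_1,\dots,q_k\})$, and return $T=(T_{top},T_1,\dots,T_k)$. Then $T$ is a two-level Steiner tree for $P_1,\dots,P_k$ and $$l(T)\le 2\alpha\cdot l(T^{\star}),$$ where $T^{\star}$ is a minimum-length two-level Steiner tree for $P_1,\dots,P_k$.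
   Context: A Steiner tree for a finite set $S\subseteq X$ is a finite tree whose vertex set is a subset of $X$ containing $S$; its length $l(\cdot)$ is the sum of $d(x,y)$ over its edges $\{x,y\}$. A two-level Steiner tree for $P_1,\dots,P_k$ is a tuple $T=(T_{top},T_1,\dots,T_k)$ where each $T_i$ is a Steiner tree for $P_i$ and $T_{top}$ is a Steiner tree such that for every $i$ there is a point $q_i$ that is a vertex of both $T_{top}$ and $T_i$ (so $T_{top}$ is a Steiner tree for $\{q_1,\dots,q_k\}$ and $T_i$ a Steiner tree for $P_i\cup\{q_i\}$). Its length is $l(T)=l(T_{top})+\sum_{i=1}^k l(T_i)$. *)

theory Defs
  imports "HOL-Analysis.Analysis"
begin

text \<open>A finite graph is a pair (V, E) with V a vertex set and E a set of
  undirected edges, each edge being a two-element set of vertices.\<close>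
type_synonym 'a graph = "'a set \<times> 'a set set"

definition verts :: "'a graph \<Rightarrow> 'a set" where "verts T = fst T"
definition edges :: "'a graph \<Rightarrow> 'a set set" where "edges T = snd T"

definition reach :: "'a set set \<Rightarrow> 'a \<Rightarrow> 'a \<Rightarrow> bool" where
  "reach E x y \<longleftrightarrow> (x, y) \<in> {(u, v). {u, v} \<in> E}\<^sup>*"

text \<open>A finite tree: finite nonempty vertex set, edges are two-element subsets
  of the vertex set, connected, and acyclic (no edge lies on a cycle, i.e.
  deleting any edge disconnects its endpoints).\<close>
definition is_tree :: "'a graph \<Rightarrow> bool" where
  "is_tree T \<longleftrightarrow>
     finite (verts T) \<and> verts T \<noteq> {} \<and>
     (\<forall>e\<in>edges T. \<exists>x y. x \<noteq> y \<and> x \<in> verts T \<and> y \<in> verts T \<and> e = {x, y}) \<and>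
     (\<forall>x\<in>verts T. \<forall>y\<in>verts T. reach (edges T) x y) \<and>
     (\<forall>e\<in>edges T. \<forall>x y. e = {x, y} \<longrightarrow> \<not> reach (edges T - {e}) x y)"

definition steiner_tree :: "'a set \<Rightarrow> 'a set \<Rightarrow> 'a graph \<Rightarrow> bool" where
  "steiner_tree M S T \<longleftrightarrow> is_tree T \<and> verts T \<subseteq> M \<and> S \<subseteq> verts T"

text \<open>Length of an edge {x,y} is d x y (well defined since d is symmetric).\<close>
definition edge_len :: "('a \<Rightarrow> 'a \<Rightarrow> real) \<Rightarrow> 'a set \<Rightarrow> real" where
  "edge_len d e = (THE r. \<exists>x y. e = {x, y} \<and> r = d x y)"

definition tree_len :: "('a \<Rightarrow> 'a \<Rightarrow> real) \<Rightarrow> 'a graph \<Rightarrow> real" where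
  "tree_len d T = (\<Sum>e\<in>edges T. edge_len d e)"

definition two_level_steiner_tree ::
  "'a set \<Rightarrow> nat \<Rightarrow> (nat \<Rightarrow> 'a set) \<Rightarrow> 'a graph \<Rightarrow> (nat \<Rightarrow> 'a graph) \<Rightarrow> bool" where
  "two_level_steiner_tree M k Ps Ttop Ts \<longleftrightarrow>
     steiner_tree M {} Ttop \<and>
     (\<forall>i\<in>{1..k}. steiner_tree M (Ps i) (Ts i)) \<and>
     (\<forall>i\<in>{1..k}. \<exists>q. q \<in> verts Ttop \<and> q \<in> verts (Ts i))"

definition two_level_len ::
  "('a \<Rightarrow> 'a \<Rightarrow> real) \<Rightarrow> nat \<Rightarrow> 'a graph \<Rightarrow> (nat \<Rightarrow> 'a graph) \<Rightarrow> real" where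
  "two_level_len d k Ttop Ts = tree_len d Ttop + (\<Sum>i=1..k. tree_len d (Ts i))"

end

theory Submission
  imports Defs
begin

lemma reach_refl: "reach E x x"
  unfolding reach_def by simp

lemma reach_step: "{x,y} \<in> E \<Longrightarrow> reach E x y"
  unfolding reach_def by auto

lemma reach_trans: "reach E x y \<Longrightarrow> reach E y z \<Longrightarrow> reach E x z"
  unfolding reach_def by (meson rtrancl_trans)

lemma reach_sym: "reach E x y \<Longrightarrow> reach E y x"
proof -
  have "sym {(u, v). {u, v} \<in> E}" by (auto simp: sym_def insert_commute)
  hence "sym ({(u, v). {u, v} \<in> E}\<^sup>*)" by (rule sym_rtrancl)
  thus "reach E x y \<Longrightarrow> reach E y x" unfolding reach_def by (meson symD)
qed

lemma reach_mono: "reach E x y \<Longrightarrow> E \<subseteq> F \<Longrightarrow> reach F x y"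
proof -
  assume a: "reach E x y" "E \<subseteq> F"
  have "{(u, v). {u, v} \<in> E} \<subseteq> {(u, v). {u, v} \<in> F}" using a(2) by auto
  thus ?thesis using a(1) unfolding reach_def by (meson rtrancl_mono subsetD)
qed

lemma reach_remove:
  assumes "reach E a b" "reach (E - {{x,y}}) x y"
  shows "reach (E - {{x,y}}) a b"
  using assms(1) unfolding reach_def[of E]
proof (induction rule: rtrancl_induct)
  case base
  then show ?case by (rule reach_refl)
next
  case (step u v)
  then have uv: "{u,v} \<in> E" by simp
  show ?case
  proof (cases "{u,v} = {x,y}")
    case True
    then have "(u = x \<and> v = y) \<or> (u = y \<and> v = x)" by (metis doubleton_eq_iff)
    then have "reach (E - {{x,y}}) u v" using assms(2) reach_sym[OF assms(2)] by blast
    then show ?thesis by (rule reach_trans[OF step.IH])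
  next
    case False
    then have "reach (E - {{x,y}}) u v" using uv by (intro reach_step) auto
    then show ?thesis by (rule reach_trans[OF step.IH])
  qed
qed

lemma spanning_tree:
  assumes "finite V" "V \<noteq> {}"
    and "\<forall>e\<in>E. \<exists>x y. x \<noteq> y \<and> x \<in> V \<and> y \<in> V \<and> e = {x, y}"
    and "\<forall>x\<in>V. \<forall>y\<in>V. reach E x y"
  shows "\<exists>E'\<subseteq>E. is_tree (V, E')"
  using assms(3,4)
proof (induction "card E" arbitrary: E rule: less_induct)
  case less
  have finE: "finite E"
  proof -
    have "E \<subseteq> Pow V"
    proof
      fix e assume "e \<in> E"
      then obtain x y where "x \<in> V" "y \<in> V" "e = {x,y}" using less.prems(1) by blast
      then show "e \<in> Pow V" by simp
    qed
    thus ?thesis using assms(1) finite_subset by blast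
  qed
  show ?case
  proof (cases "\<forall>e\<in>E. \<forall>x y. e = {x, y} \<longrightarrow> \<not> reach (E - {e}) x y")
    case True
    then have "is_tree (V, E)"
      unfolding is_tree_def verts_def edges_def fst_conv snd_conv
      by (intro conjI) (rule assms(1), rule assms(2), rule less.prems(1), rule less.prems(2), rule True)
    then show ?thesis by blast
  next
    case False
    then obtain x y where e: "{x,y} \<in> E" "reach (E - {{x,y}}) x y" by blast
    have c: "card (E - {{x,y}}) < card E" using card_Diff1_less[OF finE e(1)] .
    have p1: "\<forall>e\<in>E - {{x,y}}. \<exists>x y. x \<noteq> y \<and> x \<in> V \<and> y \<in> V \<and> e = {x, y}"
    proof
      fix e assume "e \<in> E - {{x,y}}"
      then have "e \<in> E" by simp
      then show "\<exists>x y. x \<noteq> y \<and> x \<in> V \<and> y \<in> V \<and> e = {x, y}"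
        by (rule less.prems(1)[rule_format])
    qed
    have p2: "\<forall>a\<in>V. \<forall>b\<in>V. reach (E - {{x,y}}) a b"
    proof (intro ballI)
      fix a b assume "a \<in> V" "b \<in> V"
      then have "reach E a b" using less.prems(2) by blast
      then show "reach (E - {{x,y}}) a b" using e(2) by (rule reach_remove)
    qed
    obtain E'' where E'': "E'' \<subseteq> E - {{x,y}}" "is_tree (V, E'')"
      using less.hyps[OF c p1 p2] by (elim exE conjE)
    have "E'' \<subseteq> E" using E''(1) by (rule subset_trans) simp
    then show ?thesis using E''(2) by blast
  qed
qed


lemma edge_len_eq:
  assumes "\<And>x y. d x y = d y x"
  shows "edge_len d {x,y} = d x y"
  unfolding edge_len_def
proof (rule the_equality)
  show "\<exists>a b. {x, y} = {a, b} \<and> d x y = d a b" by blast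
next
  fix r assume "\<exists>a b. {x, y} = {a, b} \<and> r = d a b"
  then obtain a b where "{x,y} = {a,b}" "r = d a b" by blast
  then show "r = d x y" using assms by (metis doubleton_eq_iff)
qed

lemma is_tree_fin: "is_tree T \<Longrightarrow> finite (verts T)"
  unfolding is_tree_def by (elim conjE)
lemma is_tree_ne: "is_tree T \<Longrightarrow> verts T \<noteq> {}"
  unfolding is_tree_def by (elim conjE)
lemma is_tree_edge: "is_tree T \<Longrightarrow> e \<in> edges T \<Longrightarrow> \<exists>x y. x \<noteq> y \<and> x \<in> verts T \<and> y \<in> verts T \<and> e = {x, y}"
  unfolding is_tree_def by (elim conjE) (erule bspec)
lemma is_tree_conn: "is_tree T \<Longrightarrow> x \<in> verts T \<Longrightarrow> y \<in> verts T \<Longrightarrow> reach (edges T) x y"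
  unfolding is_tree_def by (elim conjE) blast

lemma tree_edges_finite: "is_tree T \<Longrightarrow> finite (edges T)"
proof -
  assume t: "is_tree T"
  have "edges T \<subseteq> Pow (verts T)"
  proof
    fix e assume "e \<in> edges T"
    then obtain x y where "x \<in> verts T" "y \<in> verts T" "e = {x,y}" using is_tree_edge[OF t] by blast
    then show "e \<in> Pow (verts T)" by simp
  qed
  moreover have "finite (verts T)" using is_tree_fin[OF t] .
  ultimately show ?thesis using finite_subset by blast
qed

lemma edge_len_nonneg:
  assumes "\<And>x y. d x y = d y x" "\<And>x y. 0 \<le> d x y" "\<exists>x y. e = {x,y}"
  shows "0 \<le> edge_len d e"
  using assms edge_len_eq[of d] by metis

lemma tree_len_nonneg:
  assumes "\<And>x y. d x y = d y x" "\<And>x y. 0 \<le> d x y" "is_tree T"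
  shows "0 \<le> tree_len d T"
  unfolding tree_len_def
proof (rule sum_nonneg)
  fix e assume "e \<in> edges T"
  then have "\<exists>x y. e = {x,y}" using is_tree_edge[OF assms(3)] by blast
  then show "0 \<le> edge_len d e" using edge_len_nonneg assms(1,2) by blast
qed

lemma sum_union_le:
  fixes f :: "'b \<Rightarrow> real"
  assumes "finite A" "finite B" "\<forall>x\<in>A\<union>B. 0 \<le> f x"
  shows "sum f (A\<union>B) \<le> sum f A + sum f B"
proof -
  have "sum f (A\<union>B) + sum f (A\<inter>B) = sum f A + sum f B"
    using sum.union_inter[OF assms(1,2)] .
  moreover have "0 \<le> sum f (A\<inter>B)" using assms(3) by (intro sum_nonneg) auto
  ultimately show ?thesis by linarith
qed

lemma sum_UN_le:
  fixes f :: "'b \<Rightarrow> real"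
  assumes "finite I" "\<forall>i\<in>I. finite (A i)" "\<forall>x\<in>(\<Union>i\<in>I. A i). 0 \<le> f x"
  shows "sum f (\<Union>i\<in>I. A i) \<le> (\<Sum>i\<in>I. sum f (A i))"
  using assms
proof (induction I rule: finite_induct)
  case empty
  then show ?case by simp
next
  case (insert j I)
  have "sum f (\<Union>i\<in>insert j I. A i) = sum f (A j \<union> (\<Union>i\<in>I. A i))" by simp
  also have "\<dots> \<le> sum f (A j) + sum f (\<Union>i\<in>I. A i)"
    using insert by (intro sum_union_le) auto
  also have "\<dots> \<le> sum f (A j) + (\<Sum>i\<in>I. sum f (A i))"
    using insert by auto
  also have "\<dots> = (\<Sum>i\<in>insert j I. sum f (A i))" using insert by simp
  finally show ?case .
qed

theorem theorem1:
  fixes M :: "'a set" and d :: "'a \<Rightarrow> 'a \<Rightarrow> real"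
    and P :: "'a set" and k :: nat and Ps :: "nat \<Rightarrow> 'a set"
    and \<A> :: "'a set \<Rightarrow> 'a graph" and \<alpha> :: real and q :: "nat \<Rightarrow> 'a"
  assumes "Metric_space M d"
    and "finite P" and "P \<subseteq> M"
    and "(\<Union>i\<in>{1..k}. Ps i) = P"
    and "\<forall>i\<in>{1..k}. Ps i \<noteq> {}"
    and "\<forall>i\<in>{1..k}. \<forall>j\<in>{1..k}. i \<noteq> j \<longrightarrow> Ps i \<inter> Ps j = {}"
    and "\<forall>S. finite S \<and> S \<subseteq> M \<longrightarrow>
           steiner_tree M S (\<A> S) \<and>
           (\<forall>T'. steiner_tree M S T' \<longrightarrow> tree_len d (\<A> S) \<le> \<alpha> * tree_len d T')"
    and "\<forall>i\<in>{1..k}. q i \<in> Ps i"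
  shows "two_level_steiner_tree M k Ps (\<A> (q ` {1..k})) (\<lambda>i. \<A> (Ps i)) \<and>
         (\<forall>Ttop' Ts'. two_level_steiner_tree M k Ps Ttop' Ts' \<longrightarrow>
            two_level_len d k (\<A> (q ` {1..k})) (\<lambda>i. \<A> (Ps i))
              \<le> 2 * \<alpha> * two_level_len d k Ttop' Ts')"
proof -
  interpret Metric_space M d by fact
  have com: "\<And>x y. d x y = d y x" by (rule commute)
  have nn: "\<And>x y. 0 \<le> d x y" by simp
  note A = assms(7)
  define Q where "Q = q ` {1..k}"
  have PsM: "\<And>i. i \<in> {1..k} \<Longrightarrow> finite (Ps i) \<and> Ps i \<subseteq> M"
  proof -
    fix i assume i: "i \<in> {1..k}"
    have "Ps i \<subseteq> P" using assms(4) i by blast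
    then show "finite (Ps i) \<and> Ps i \<subseteq> M" using assms(2,3) finite_subset by blast
  qed
  have QM1: "finite Q" unfolding Q_def by simp
  have QM2: "Q \<subseteq> M"
  proof
    fix x assume "x \<in> Q"
    then obtain i where i: "i \<in> {1..k}" and x: "x = q i" unfolding Q_def by blast
    have "q i \<in> Ps i" using assms(8) i by blast
    then show "x \<in> M" using PsM[OF i] x by blast
  qed
  note QM = QM1 QM2
  have Atr: "steiner_tree M S (\<A> S)" if "finite S" "S \<subseteq> M" for S
    using A that by blast
  have Aop: "tree_len d (\<A> S) \<le> \<alpha> * tree_len d T'" if "finite S" "S \<subseteq> M" "steiner_tree M S T'" for S T'
    using A that by blast
  have ATr: "is_tree (\<A> S)" if "finite S" "S \<subseteq> M" for S
    using Atr[OF that] unfolding steiner_tree_def by (elim conjE)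
  have AQ: "steiner_tree M Q (\<A> Q)" using Atr[OF QM1 QM2] .
  have APs: "\<And>i. i \<in> {1..k} \<Longrightarrow> steiner_tree M (Ps i) (\<A> (Ps i))"
    using Atr PsM by blast
  have part1: "two_level_steiner_tree M k Ps (\<A> Q) (\<lambda>i. \<A> (Ps i))"
    unfolding two_level_steiner_tree_def
  proof (intro conjI ballI)
    show "steiner_tree M {} (\<A> Q)" using AQ unfolding steiner_tree_def by blast
  next
    fix i assume "i \<in> {1..k}"
    then show "steiner_tree M (Ps i) (\<A> (Ps i))" by (rule APs)
  next
    fix i assume i: "i \<in> {1..k}"
    have "q i \<in> verts (\<A> Q)" using AQ i unfolding steiner_tree_def Q_def by blast
    moreover have "q i \<in> verts (\<A> (Ps i))" using APs[OF i] assms(8) i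
      unfolding steiner_tree_def by blast
    ultimately show "\<exists>qa. qa \<in> verts (\<A> Q) \<and> qa \<in> verts (\<A> (Ps i))" by blast
  qed
  have part2: "two_level_len d k (\<A> Q) (\<lambda>i. \<A> (Ps i)) \<le> 2 * \<alpha> * two_level_len d k Ttop' Ts'"
    if H: "two_level_steiner_tree M k Ps Ttop' Ts'" for Ttop' Ts'
  proof -
    have Ttop: "steiner_tree M {} Ttop'" using H unfolding two_level_steiner_tree_def by blast
    have Tsi: "\<And>i. i \<in> {1..k} \<Longrightarrow> steiner_tree M (Ps i) (Ts' i)"
      using H unfolding two_level_steiner_tree_def by blast
    have meet: "\<And>i. i \<in> {1..k} \<Longrightarrow> \<exists>p. p \<in> verts Ttop' \<and> p \<in> verts (Ts' i)"
      using H unfolding two_level_steiner_tree_def by blast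
    have ttree: "is_tree Ttop'" using Ttop unfolding steiner_tree_def by blast
    have itree: "\<And>i. i \<in> {1..k} \<Longrightarrow> is_tree (Ts' i)" using Tsi unfolding steiner_tree_def by blast
    define V where "V = verts Ttop' \<union> (\<Union>i\<in>{1..k}. verts (Ts' i))"
    define E where "E = edges Ttop' \<union> (\<Union>i\<in>{1..k}. edges (Ts' i))"
    have finV: "finite V" unfolding V_def using is_tree_fin[OF ttree] is_tree_fin[OF itree] by simp
    obtain r where r: "r \<in> verts Ttop'" using is_tree_ne[OF ttree] by blast
    have Vne: "V \<noteq> {}" using r unfolding V_def by blast
    have edgeok: "\<forall>e\<in>E. \<exists>x y. x \<noteq> y \<and> x \<in> V \<and> y \<in> V \<and> e = {x, y}"
    proof
      fix e assume "e \<in> E"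
      then consider "e \<in> edges Ttop'" | i where "i \<in> {1..k}" "e \<in> edges (Ts' i)"
        unfolding E_def by blast
      then show "\<exists>x y. x \<noteq> y \<and> x \<in> V \<and> y \<in> V \<and> e = {x, y}"
      proof cases
        case 1
        then obtain x y where "x \<noteq> y" "x \<in> verts Ttop'" "y \<in> verts Ttop'" "e = {x,y}"
          using is_tree_edge[OF ttree] by blast
        then show ?thesis unfolding V_def by blast
      next
        case 2
        then obtain x y where "x \<noteq> y" "x \<in> verts (Ts' i)" "y \<in> verts (Ts' i)" "e = {x,y}"
          using is_tree_edge[OF itree[OF 2(1)] 2(2)] by blast
        then show ?thesis using 2(1) unfolding V_def by blast
      qed
    qed
    have tor: "reach E a r" if a: "a \<in> V" for a
    proof -
      consider "a \<in> verts Ttop'" | i where "i \<in> {1..k}" "a \<in> verts (Ts' i)"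
        using a unfolding V_def by blast
      then show ?thesis
      proof cases
        case 1
        have "reach (edges Ttop') a r" by (rule is_tree_conn[OF ttree 1 r])
        then show ?thesis by (rule reach_mono) (auto simp: E_def)
      next
        case 2
        obtain p where p: "p \<in> verts Ttop'" "p \<in> verts (Ts' i)" using meet[OF 2(1)] by blast
        have "reach (edges (Ts' i)) a p" by (rule is_tree_conn[OF itree[OF 2(1)] 2(2) p(2)])
        then have 1: "reach E a p" by (rule reach_mono) (use 2(1) in \<open>auto simp: E_def\<close>)
        have "reach (edges Ttop') p r" by (rule is_tree_conn[OF ttree p(1) r])
        then have "reach E p r" by (rule reach_mono) (auto simp: E_def)
        then show ?thesis by (rule reach_trans[OF 1])
      qed
    qed
    have conn: "\<forall>x\<in>V. \<forall>y\<in>V. reach E x y"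
    proof (intro ballI)
      fix x y assume x: "x \<in> V" and y: "y \<in> V"
      show "reach E x y" using reach_trans[OF tor[OF x] reach_sym[OF tor[OF y]]] .
    qed
    obtain E' where E': "E' \<subseteq> E" "is_tree (V, E')"
      using spanning_tree[OF finV Vne edgeok conn] by blast
    have VM: "V \<subseteq> M" unfolding V_def using Ttop Tsi unfolding steiner_tree_def by blast
    have QV: "Q \<subseteq> V" unfolding Q_def V_def using Tsi assms(8) unfolding steiner_tree_def by blast
    have U: "steiner_tree M Q (V, E')" using E' VM QV unfolding steiner_tree_def verts_def by simp
    have finE: "finite E" unfolding E_def
      using tree_edges_finite[OF ttree] tree_edges_finite[OF itree] by simp
    have enn: "\<forall>e\<in>E. 0 \<le> edge_len d e"
    proof
      fix e assume "e \<in> E"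
      then obtain x y where "e = {x,y}" using edgeok by blast
      then have "\<exists>x y. e = {x,y}" by blast
      then show "0 \<le> edge_len d e" by (rule edge_len_nonneg[of d, OF com nn])
    qed
    have s1: "tree_len d (V, E') \<le> sum (edge_len d) E"
      unfolding tree_len_def edges_def using E'(1) finE enn by (intro sum_mono2) auto
    have s2: "sum (edge_len d) E \<le> sum (edge_len d) (edges Ttop') + sum (edge_len d) (\<Union>i\<in>{1..k}. edges (Ts' i))"
      unfolding E_def
      by (rule sum_union_le) (use finE enn in \<open>auto simp: E_def\<close>)
    have s3: "sum (edge_len d) (\<Union>i\<in>{1..k}. edges (Ts' i)) \<le> (\<Sum>i=1..k. tree_len d (Ts' i))"
      unfolding tree_len_def
      by (rule sum_UN_le) (use enn tree_edges_finite[OF itree] in \<open>auto simp: E_def\<close>)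
    have lenU: "tree_len d (V, E') \<le> tree_len d Ttop' + (\<Sum>i=1..k. tree_len d (Ts' i))"
      using s1 s2 s3 unfolding tree_len_def[of d Ttop'] by linarith
    define t where "t = tree_len d Ttop'"
    define a where "a = (\<lambda>i. tree_len d (Ts' i))"
    define L where "L = (\<lambda>i. tree_len d (\<A> (Ps i)))"
    define LQ where "LQ = tree_len d (\<A> Q)"
    define u where "u = tree_len d (V, E')"
    have t0: "0 \<le> t" unfolding t_def using tree_len_nonneg[of d, OF com nn ttree] .
    have a0: "\<And>i. i \<in> {1..k} \<Longrightarrow> 0 \<le> a i" unfolding a_def using tree_len_nonneg[of d, OF com nn itree] by blast
    have L0: "\<And>i. i \<in> {1..k} \<Longrightarrow> 0 \<le> L i" unfolding L_def using tree_len_nonneg[of d, OF com nn ATr] PsM by blast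
    have LQ0: "0 \<le> LQ" unfolding LQ_def using tree_len_nonneg[of d, OF com nn ATr[OF QM1 QM2]] .
    have u0: "0 \<le> u" unfolding u_def using tree_len_nonneg[of d, OF com nn E'(2)] .
    have LQu: "LQ \<le> \<alpha> * u" unfolding LQ_def u_def using Aop[OF QM1 QM2 U] .
    have La: "\<And>i. i \<in> {1..k} \<Longrightarrow> L i \<le> \<alpha> * a i" unfolding L_def a_def using Aop PsM Tsi by blast
    have A0: "tree_len d (\<A> {}) \<le> \<alpha> * t" unfolding t_def using Aop[OF _ _ Ttop] by simp
    have A00: "0 \<le> tree_len d (\<A> {})" using tree_len_nonneg[of d, OF com nn ATr[of "{}"]] by simp
    have lenU': "u \<le> t + (\<Sum>i=1..k. a i)" using lenU unfolding u_def t_def a_def .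
    have goal: "LQ + (\<Sum>i=1..k. L i) \<le> 2 * \<alpha> * (t + (\<Sum>i=1..k. a i))"
    proof (cases "0 \<le> \<alpha>")
      case True
      have 1: "LQ \<le> \<alpha> * (t + (\<Sum>i=1..k. a i))"
        using LQu mult_left_mono[OF lenU' True] by linarith
      have "(\<Sum>i=1..k. L i) \<le> (\<Sum>i=1..k. \<alpha> * a i)" using La by (rule sum_mono)
      also have "\<dots> = \<alpha> * (\<Sum>i=1..k. a i)" by (simp add: sum_distrib_left)
      finally have 2: "(\<Sum>i=1..k. L i) \<le> \<alpha> * (\<Sum>i=1..k. a i)" .
      have 3: "0 \<le> \<alpha> * t" using True t0 by simp
      show ?thesis using 1 2 3 by (simp add: algebra_simps)
    next
      case False
      have tz: "t = 0"
      proof -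
        have "0 \<le> \<alpha> * t" using A0 A00 by linarith
        then show ?thesis using False t0 by (simp add: mult_le_0_iff zero_le_mult_iff)
      qed
      have az: "\<And>i. i \<in> {1..k} \<Longrightarrow> a i = 0"
      proof -
        fix i assume i: "i \<in> {1..k}"
        have "0 \<le> \<alpha> * a i" using La[OF i] L0[OF i] by linarith
        then show "a i = 0" using False a0[OF i] by (simp add: zero_le_mult_iff)
      qed
      have "(\<Sum>i=1..k. a i) = 0" using az by simp
      moreover have "(\<Sum>i=1..k. L i) \<le> 0"
      proof (rule sum_nonpos)
        fix i assume i: "i \<in> {1..k}"
        show "L i \<le> 0" using La[OF i] az[OF i] by simp
      qed
      moreover have "LQ \<le> 0"
      proof -
        have "\<alpha> * u \<le> 0" using u0 False by (simp add: mult_nonpos_nonneg)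
        then show ?thesis using LQu by linarith
      qed
      ultimately show ?thesis using tz by simp
    qed
    then show ?thesis unfolding two_level_len_def LQ_def L_def t_def a_def by simp
  qed
  show ?thesis using part1 part2 unfolding Q_def by blast
qed

end
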